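(* Let $D\ge2$, let $C_1,\dots,C_D\subseteq\mathbb{F}_q^n$ be linear codes and let $C_1'\subseteq C_1$ be a linear subcode. Then $$\rho(C_1',C_2,\dots,C_D)\ge\frac{\rho(C_1,C_2,\dots,C_D)}{1+\rho(C_2,\dots,C_D)^{-1}}.$$
   Context: $\mathbb{F}_q$ is a finite field of characteristic 2. For a finite set $S$, $\mathbb{F}_q^S$ is the space of vectors indexed by $S$; $|v|$ is the Hamming weight and $\|v\|=|v|/|S|$. For a collection of $E$ linear codes $\mathcal{A}_1,\dots,\mathcal{A}_E\subseteq\mathbb{F}_q^n$: $\mathcal{L}_i$ is the set of lines in $[n]^E$ parallel to the $i$-th axis (sets $A_1\times\cdots\times A_E$ with $A_i=[n]$, $|A_j|=1$ for $j\ne i$); $\mathcal{A}^{(i)}=\{c\in\mathbb{F}_q^{[n]^E}:c|_\ell\in\mathcal{A}_i\ \forall\ell\in\mathcal{L}_i\}$; $\mathcal{A}_1\boxplus\cdots\boxplus\mathcal{A}_E=\sum_i\mathcal{A}^{(i)}$; for $x\in\mathbb{F}_q^{[n]^E}$, $|x|_i$ is the number of $\ell\in\mathcal{L}_i$ with $x|_\ell\ne0$ and $\|x\|_i=|x|_i/n^{E-1}$. The collection is $\rho$-product-expanding if every $c\in\mathcal{A}_1\boxplus\cdots\boxplus\mathcal{A}_E$ can be written $c=\sum_ia_i$, $a_i\in\mathcal{A}^{(i)}$, with $\rho\sum_i\|a_i\|_i\le\|c\|$; $\rho(\mathcal{A}_1,\dots,\mathcal{A}_E)$ is the maximal such $\rho$.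 *)

theory Defs
  imports "HOL-Library.Extended_Real" "HOL-Library.FuncSet"
begin

text \<open>Vectors of F_q^n are functions nat => 'a vanishing outside {..<n}.
  A linear code is an F_q-subspace of this space.\<close>

definition is_code :: "nat \<Rightarrow> (nat \<Rightarrow> 'a::field) set \<Rightarrow> bool" where
  "is_code n C \<longleftrightarrow> C \<subseteq> {v. \<forall>j. n \<le> j \<longrightarrow> v j = 0} \<and> (\<lambda>_. 0) \<in> C
     \<and> (\<forall>u\<in>C. \<forall>v\<in>C. (\<lambda>j. u j + v j) \<in> C)
     \<and> (\<forall>c. \<forall>v\<in>C. (\<lambda>j. c * v j) \<in> C)"

definition grid :: "nat \<Rightarrow> nat \<Rightarrow> (nat \<Rightarrow> nat) set" where
  "grid n E = PiE {..<E} (\<lambda>_. {..<n})"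

definition words :: "nat \<Rightarrow> nat \<Rightarrow> ((nat \<Rightarrow> nat) \<Rightarrow> 'a::zero) set" where
  "words n E = {x. \<forall>p. p \<notin> grid n E \<longrightarrow> x p = 0}"

definition line_vec :: "nat \<Rightarrow> ((nat \<Rightarrow> nat) \<Rightarrow> 'a::zero) \<Rightarrow> nat \<Rightarrow> (nat \<Rightarrow> nat) \<Rightarrow> nat \<Rightarrow> 'a" where
  "line_vec n x i p = (\<lambda>t. if t < n then x (p(i := t)) else 0)"

text \<open>The lines in L_i are in bijection with grid points p having p i = 0.\<close>
definition lines :: "nat \<Rightarrow> nat \<Rightarrow> nat \<Rightarrow> (nat \<Rightarrow> nat) set" where
  "lines n E i = {p \<in> grid n E. p i = 0}"

definition axis_code :: "nat \<Rightarrow> nat \<Rightarrow> (nat \<Rightarrow> (nat \<Rightarrow> 'a::zero) set) \<Rightarrow> nat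
    \<Rightarrow> ((nat \<Rightarrow> nat) \<Rightarrow> 'a) set" where
  "axis_code n E A i = {c \<in> words n E. \<forall>p \<in> lines n E i. line_vec n c i p \<in> A i}"

definition sum_code :: "nat \<Rightarrow> nat \<Rightarrow> (nat \<Rightarrow> (nat \<Rightarrow> 'a::comm_monoid_add) set)
    \<Rightarrow> ((nat \<Rightarrow> nat) \<Rightarrow> 'a) set" where
  "sum_code n E A = {c. \<exists>a. (\<forall>i<E. a i \<in> axis_code n E A i) \<and> c = (\<lambda>p. \<Sum>i<E. a i p)}"

definition rel_wt :: "nat \<Rightarrow> nat \<Rightarrow> ((nat \<Rightarrow> nat) \<Rightarrow> 'a::zero) \<Rightarrow> real" where
  "rel_wt n E x = real (card {p \<in> grid n E. x p \<noteq> 0}) / real (card (grid n E))"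

definition line_wt :: "nat \<Rightarrow> nat \<Rightarrow> nat \<Rightarrow> ((nat \<Rightarrow> nat) \<Rightarrow> 'a::zero) \<Rightarrow> real" where
  "line_wt n E i x = real (card {p \<in> lines n E i. line_vec n x i p \<noteq> (\<lambda>_. 0)}) / real n ^ (E - 1)"

definition product_expanding :: "nat \<Rightarrow> nat \<Rightarrow> (nat \<Rightarrow> (nat \<Rightarrow> 'a::comm_monoid_add) set)
    \<Rightarrow> real \<Rightarrow> bool" where
  "product_expanding n E A r \<longleftrightarrow>
     (\<forall>c \<in> sum_code n E A. \<exists>a. (\<forall>i<E. a i \<in> axis_code n E A i) \<and> c = (\<lambda>p. \<Sum>i<E. a i p)
        \<and> r * (\<Sum>i<E. line_wt n E i (a i)) \<le> rel_wt n E c)"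

definition rho :: "nat \<Rightarrow> nat \<Rightarrow> (nat \<Rightarrow> (nat \<Rightarrow> 'a::comm_monoid_add) set) \<Rightarrow> ereal" where
  "rho n E A = Sup (ereal ` {r. product_expanding n E A r})"

end

theory Submission
  imports Defs "HOL-Library.Function_Algebras"
begin

definition cns :: "nat \<Rightarrow> nat \<Rightarrow> (nat \<Rightarrow> nat) \<Rightarrow> nat \<Rightarrow> nat" where
  "cns E t q = (\<lambda>j. if j < Suc E then (case j of 0 \<Rightarrow> t | Suc k \<Rightarrow> q k) else undefined)"

definition tlp :: "nat \<Rightarrow> (nat \<Rightarrow> nat) \<Rightarrow> nat \<Rightarrow> nat" where
  "tlp E p = (\<lambda>j. if j < E then p (Suc j) else undefined)"

lemma grid_iff: "p \<in> grid n E \<longleftrightarrow> (\<forall>j<E. p j < n) \<and> (\<forall>j. E \<le> j \<longrightarrow> p j = undefined)"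
  by (auto simp: grid_def PiE_iff extensional_def)

lemma finite_grid[simp]: "finite (grid n E)"
  unfolding grid_def by (rule finite_PiE) auto

lemma card_grid: "card (grid n E) = n ^ E"
  unfolding grid_def by (simp add: card_PiE)

lemma cns_grid: "t < n \<Longrightarrow> q \<in> grid n E \<Longrightarrow> cns E t q \<in> grid n (Suc E)"
  unfolding grid_iff cns_def by (auto split: nat.split)

lemma tlp_grid: "p \<in> grid n (Suc E) \<Longrightarrow> tlp E p \<in> grid n E"
  unfolding grid_iff tlp_def by auto

lemma p0_lt: "p \<in> grid n (Suc E) \<Longrightarrow> p 0 < n"
  unfolding grid_iff by auto

lemma cns_tlp: "p \<in> grid n (Suc E) \<Longrightarrow> cns E (p 0) (tlp E p) = p"
  unfolding grid_iff cns_def tlp_def by (auto simp: fun_eq_iff split: nat.split)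

lemma tlp_cns: "q \<in> grid n E \<Longrightarrow> tlp E (cns E t q) = q"
  unfolding grid_iff cns_def tlp_def by (auto simp: fun_eq_iff)

lemma cns_0[simp]: "cns E t q 0 = t"
  unfolding cns_def by simp

lemma cns_Suc[simp]: "i < E \<Longrightarrow> cns E t q (Suc i) = q i"
  unfolding cns_def by simp

lemma cns_upd0: "(cns E t q)(0 := s) = cns E s q"
  unfolding cns_def by (auto simp: fun_eq_iff split: nat.split)

lemma cns_updS: "i < E \<Longrightarrow> (cns E t q)(Suc i := s) = cns E t (q(i := s))"
  unfolding cns_def by (auto simp: fun_eq_iff split: nat.split)

lemma tlp_upd0: "tlp E (p(0 := s)) = tlp E p"
  unfolding tlp_def by (auto simp: fun_eq_iff)

lemma tlp_updS: "i < E \<Longrightarrow> tlp E (p(Suc i := s)) = (tlp E p)(i := s)"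
  unfolding tlp_def by (auto simp: fun_eq_iff)

lemma upd_grid: "p \<in> grid n E \<Longrightarrow> i < E \<Longrightarrow> s < n \<Longrightarrow> p(i := s) \<in> grid n E"
  unfolding grid_iff by auto

lemma card_split:
  "card {p \<in> grid n (Suc E). P (p 0) (tlp E p)} = (\<Sum>t<n. card {q \<in> grid n E. P t q})"
proof -
  have eq: "{p \<in> grid n (Suc E). P (p 0) (tlp E p)} =
      (\<lambda>(t,q). cns E t q) ` (SIGMA t:{..<n}. {q \<in> grid n E. P t q})"
  proof (rule set_eqI, rule iffI)
    fix p assume "p \<in> {p \<in> grid n (Suc E). P (p 0) (tlp E p)}"
    hence p: "p \<in> grid n (Suc E)" "P (p 0) (tlp E p)" by auto
    show "p \<in> (\<lambda>(t,q). cns E t q) ` (SIGMA t:{..<n}. {q \<in> grid n E. P t q})"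
      using p cns_tlp[OF p(1)] p0_lt[OF p(1)] tlp_grid[OF p(1)]
      by (auto intro!: image_eqI[where x="(p 0, tlp E p)"])
  next
    fix p assume "p \<in> (\<lambda>(t,q). cns E t q) ` (SIGMA t:{..<n}. {q \<in> grid n E. P t q})"
    then obtain t q where "t < n" "q \<in> grid n E" "P t q" "p = cns E t q" by auto
    thus "p \<in> {p \<in> grid n (Suc E). P (p 0) (tlp E p)}"
      by (auto simp: cns_grid tlp_cns)
  qed
  have inj: "inj_on (\<lambda>(t,q). cns E t q) (SIGMA t:{..<n}. {q \<in> grid n E. P t q})"
  proof (rule inj_onI, clarsimp)
    fix t q t' q' assume "q \<in> grid n E" "q' \<in> grid n E" "cns E t q = cns E t' q'"
    thus "t = t' \<and> q = q'" by (metis cns_0 tlp_cns)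
  qed
  show ?thesis unfolding eq card_image[OF inj]
    by (subst card_SigmaI) auto
qed

lemma code_out: "is_code n A \<Longrightarrow> v \<in> A \<Longrightarrow> n \<le> j \<Longrightarrow> v j = 0"
  unfolding is_code_def by auto

lemma code_add: "is_code n A \<Longrightarrow> u \<in> A \<Longrightarrow> v \<in> A \<Longrightarrow> (\<lambda>j. u j + v j) \<in> A"
  unfolding is_code_def by auto

lemma code_scale: "is_code n A \<Longrightarrow> v \<in> A \<Longrightarrow> (\<lambda>j. c * v j) \<in> A"
  unfolding is_code_def by auto

lemma code_zero: "is_code n A \<Longrightarrow> (\<lambda>_. 0) \<in> A"
  unfolding is_code_def by auto

lemma code_diff:
  fixes A :: "(nat \<Rightarrow> 'a::field) set"
  assumes "is_code n A" "u \<in> A" "v \<in> A" shows "(\<lambda>j. u j - v j) \<in> A"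
proof -
  have "(\<lambda>j. (-1) * v j) \<in> A" using code_scale assms by blast
  hence "(\<lambda>j. u j + (-1) * v j) \<in> A" using code_add[OF assms(1,2)] by blast
  thus ?thesis by simp
qed

lemma code_lin:
  fixes A :: "(nat \<Rightarrow> 'a::field) set"
  assumes "is_code n A" "finite S" "\<forall>s\<in>S. u s \<in> A \<and> w s \<in> A"
  shows "(\<lambda>j. \<Sum>s\<in>S. k s * (u s j - w s j)) \<in> A"
  using assms(2,3)
proof (induction S rule: finite_induct)
  case empty
  then show ?case using code_zero[OF assms(1)] by simp
next
  case (insert x F)
  have "(\<lambda>j. k x * (u x j - w x j)) \<in> A"
    using code_scale[OF assms(1) code_diff[OF assms(1)]] insert.prems by blast
  then have "(\<lambda>j. k x * (u x j - w x j) + (\<Sum>s\<in>F. k s * (u s j - w s j))) \<in> A"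
    using code_add[OF assms(1)] insert by blast
  then show ?case using insert by simp
qed

lemma line_vec_lin:
  fixes x y :: "'s \<Rightarrow> (nat \<Rightarrow> nat) \<Rightarrow> 'a::field"
  shows "line_vec n (\<lambda>p. \<Sum>s\<in>S. k s * (x s p - y s p)) i p =
     (\<lambda>t. \<Sum>s\<in>S. k s * (line_vec n (x s) i p t - line_vec n (y s) i p t))"
  by (auto simp: line_vec_def fun_eq_iff)

lemma axis_lin:
  fixes A :: "nat \<Rightarrow> (nat \<Rightarrow> 'a::field) set"
  assumes "is_code n (A i)" "finite S" "\<forall>s\<in>S. x s \<in> axis_code n E A i \<and> y s \<in> axis_code n E A i"
  shows "(\<lambda>p. \<Sum>s\<in>S. k s * (x s p - y s p)) \<in> axis_code n E A i"
  using assms unfolding axis_code_def words_def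
  by (auto simp: line_vec_lin intro!: code_lin)

lemma axis_add:
  fixes A :: "nat \<Rightarrow> (nat \<Rightarrow> 'a::field) set"
  assumes "is_code n (A i)" "x \<in> axis_code n E A i" "y \<in> axis_code n E A i"
  shows "(\<lambda>p. x p + y p) \<in> axis_code n E A i"
proof -
  have "\<And>p. line_vec n (\<lambda>p. x p + y p) i p = (\<lambda>t. line_vec n x i p t + line_vec n y i p t)"
    by (auto simp: line_vec_def)
  thus ?thesis using assms unfolding axis_code_def words_def
    by (auto intro!: code_add[OF assms(1)])
qed

lemma axis_mono: "(\<And>i. A i \<subseteq> B i) \<Longrightarrow> axis_code n E A i \<subseteq> axis_code n E B i"
  unfolding axis_code_def by blast

definition slice :: "nat \<Rightarrow> nat \<Rightarrow> nat \<Rightarrow> ((nat \<Rightarrow> nat) \<Rightarrow> 'a::zero) \<Rightarrow> (nat \<Rightarrow> nat) \<Rightarrow> 'a" where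
  "slice n E t x = (\<lambda>q. if q \<in> grid n E then x (cns E t q) else 0)"

lemma line_vec_slice:
  assumes "q \<in> grid n E" "i < E"
  shows "line_vec n x (Suc i) (cns E t q) = line_vec n (slice n E t x) i q"
  using assms by (auto simp: line_vec_def slice_def fun_eq_iff cns_updS upd_grid)

lemma slice_axis:
  assumes "i < E" "t < n" "x \<in> axis_code n (Suc E) A (Suc i)"
  shows "slice n E t x \<in> axis_code n E (\<lambda>k. A (Suc k)) i"
proof -
  have "slice n E t x \<in> words n E" unfolding words_def slice_def by auto
  moreover have "line_vec n (slice n E t x) i q \<in> A (Suc i)" if q: "q \<in> lines n E i" for q
  proof -
    have "q \<in> grid n E" "q i = 0" using q unfolding lines_def by auto
    hence "cns E t q \<in> lines n (Suc E) (Suc i)"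
      unfolding lines_def using assms cns_grid by auto
    hence "line_vec n x (Suc i) (cns E t q) \<in> A (Suc i)"
      using assms(3) unfolding axis_code_def by auto
    thus ?thesis using line_vec_slice[OF \<open>q \<in> grid n E\<close> assms(1), of x t] by simp
  qed
  ultimately show ?thesis unfolding axis_code_def by auto
qed

definition asm :: "nat \<Rightarrow> nat \<Rightarrow> (nat \<Rightarrow> nat \<Rightarrow> (nat \<Rightarrow> nat) \<Rightarrow> 'a::zero) \<Rightarrow> nat \<Rightarrow> (nat \<Rightarrow> nat) \<Rightarrow> 'a" where
  "asm n E G i = (\<lambda>p. if p \<in> grid n (Suc E) then G (p 0) i (tlp E p) else 0)"

lemma line_vec_asm:
  assumes "p \<in> grid n (Suc E)" "i < E"
  shows "line_vec n (asm n E G i) (Suc i) p = line_vec n (G (p 0) i) i (tlp E p)"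
  using assms by (auto simp: line_vec_def asm_def fun_eq_iff tlp_updS upd_grid)

lemma tlp_at: "i < E \<Longrightarrow> tlp E p i = p (Suc i)"
  unfolding tlp_def by simp

lemma asm_axis:
  assumes "i < E" "\<forall>t<n. G t i \<in> axis_code n E (\<lambda>k. A (Suc k)) i"
  shows "asm n E G i \<in> axis_code n (Suc E) A (Suc i)"
proof -
  have "asm n E G i \<in> words n (Suc E)" unfolding words_def asm_def by auto
  moreover have "line_vec n (asm n E G i) (Suc i) p \<in> A (Suc i)" if p: "p \<in> lines n (Suc E) (Suc i)" for p
  proof -
    have pg: "p \<in> grid n (Suc E)" "p (Suc i) = 0" using p unfolding lines_def by auto
    hence "tlp E p \<in> lines n E i" unfolding lines_def using tlp_grid tlp_at assms(1) by auto
    hence "line_vec n (G (p 0) i) i (tlp E p) \<in> A (Suc i)"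
      using assms(2) p0_lt[OF pg(1)] unfolding axis_code_def by auto
    thus ?thesis using line_vec_asm[OF pg(1) assms(1), of G] by simp
  qed
  ultimately show ?thesis unfolding axis_code_def by auto
qed

lemma lw_asm:
  assumes "n \<ge> 1" "E \<ge> 1" "i < E"
  shows "line_wt n (Suc E) (Suc i) (asm n E G i) = (\<Sum>t<n. line_wt n E i (G t i)) / real n"
proof -
  have "{p \<in> lines n (Suc E) (Suc i). line_vec n (asm n E G i) (Suc i) p \<noteq> (\<lambda>_. 0)}
     = {p \<in> grid n (Suc E). tlp E p i = 0 \<and> line_vec n (G (p 0) i) i (tlp E p) \<noteq> (\<lambda>_. 0)}"
  proof (rule set_eqI)
    fix p
    show "p \<in> {p \<in> lines n (Suc E) (Suc i). line_vec n (asm n E G i) (Suc i) p \<noteq> (\<lambda>_. 0)} \<longleftrightarrow>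
      p \<in> {p \<in> grid n (Suc E). tlp E p i = 0 \<and> line_vec n (G (p 0) i) i (tlp E p) \<noteq> (\<lambda>_. 0)}"
      unfolding lines_def mem_Collect_eq tlp_at[OF assms(3)]
      using line_vec_asm[OF _ assms(3), of p n G] by auto
  qed
  hence "card {p \<in> lines n (Suc E) (Suc i). line_vec n (asm n E G i) (Suc i) p \<noteq> (\<lambda>_. 0)}
     = card {p \<in> grid n (Suc E). (\<lambda>t q. q i = 0 \<and> line_vec n (G t i) i q \<noteq> (\<lambda>_. 0)) (p 0) (tlp E p)}"
    by simp
  also have "\<dots> = (\<Sum>t<n. card {q \<in> grid n E. (\<lambda>t q. q i = 0 \<and> line_vec n (G t i) i q \<noteq> (\<lambda>_. 0)) t q})"
    by (rule card_split[of n E "\<lambda>t q. q i = 0 \<and> line_vec n (G t i) i q \<noteq> (\<lambda>_. 0)"])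
  also have "\<dots> = (\<Sum>t<n. card {q \<in> lines n E i. line_vec n (G t i) i q \<noteq> (\<lambda>_. 0)})"
    by (intro sum.cong refl arg_cong[where f=card]) (auto simp: lines_def)
  finally have c: "card {p \<in> lines n (Suc E) (Suc i). line_vec n (asm n E G i) (Suc i) p \<noteq> (\<lambda>_. 0)}
     = (\<Sum>t<n. card {q \<in> lines n E i. line_vec n (G t i) i q \<noteq> (\<lambda>_. 0)})" .
  have pw: "real n ^ E = real n * real n ^ (E - 1)"
    using assms(2) by (cases E) auto
  show ?thesis unfolding line_wt_def c pw of_nat_sum diff_Suc_1
    by (simp add: sum_divide_distrib[symmetric] divide_divide_eq_left mult.commute)
qed

lemma rw_split:
  assumes "n \<ge> 1"
  shows "rel_wt n (Suc E) f = (\<Sum>t<n. rel_wt n E (slice n E t f)) / real n"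
proof -
  have "{p \<in> grid n (Suc E). f p \<noteq> 0} = {p \<in> grid n (Suc E). slice n E (p 0) f (tlp E p) \<noteq> 0}"
    unfolding slice_def using tlp_grid cns_tlp by auto
  hence c: "card {p \<in> grid n (Suc E). f p \<noteq> 0} = (\<Sum>t<n. card {q \<in> grid n E. slice n E t f q \<noteq> 0})"
    using card_split[of n E "\<lambda>t q. slice n E t f q \<noteq> 0"] by simp
  show ?thesis unfolding rel_wt_def c card_grid of_nat_sum of_nat_power power_Suc
    by (simp add: sum_divide_distrib[symmetric] divide_divide_eq_left mult.commute)
qed

lemma lw_subadd:
  fixes x y :: "(nat \<Rightarrow> nat) \<Rightarrow> 'a::comm_monoid_add"
  shows
  "line_wt n E i (\<lambda>p. x p + y p) \<le> line_wt n E i x + line_wt n E i y"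
proof -
  let ?S = "\<lambda>z. {p \<in> lines n E i. line_vec n z i p \<noteq> (\<lambda>_. 0)}"
  have fin: "finite (lines n E i)" unfolding lines_def by simp
  have "?S (\<lambda>p. x p + y p) \<subseteq> ?S x \<union> ?S y"
  proof
    fix p assume p: "p \<in> ?S (\<lambda>p. x p + y p)"
    show "p \<in> ?S x \<union> ?S y"
    proof (rule ccontr)
      assume "p \<notin> ?S x \<union> ?S y"
      hence "line_vec n x i p = (\<lambda>_. 0)" "line_vec n y i p = (\<lambda>_. 0)" using p by auto
      hence "x (p(i := t)) = 0 \<and> y (p(i := t)) = 0" if "t < n" for t
        using that unfolding line_vec_def by (metis (mono_tags, lifting))
      hence "line_vec n (\<lambda>p. x p + y p) i p = (\<lambda>_. 0)"
        unfolding line_vec_def by auto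
      thus False using p by auto
    qed
  qed
  hence "card (?S (\<lambda>p. x p + y p)) \<le> card (?S x \<union> ?S y)"
    by (rule card_mono[rotated]) (use fin in auto)
  also have "\<dots> \<le> card (?S x) + card (?S y)" by (rule card_Un_le)
  finally have "real (card (?S (\<lambda>p. x p + y p))) \<le> real (card (?S x)) + real (card (?S y))"
    by linarith
  thus ?thesis unfolding line_wt_def by (simp add: add_divide_distrib[symmetric] divide_right_mono)
qed

lemma lw_nonneg: "line_wt n E i x \<ge> 0"
  unfolding line_wt_def by simp

lemma rw_nonneg: "rel_wt n E x \<ge> 0"
  unfolding rel_wt_def by simp

definition colv :: "nat \<Rightarrow> nat \<Rightarrow> ((nat \<Rightarrow> nat) \<Rightarrow> 'a::zero) \<Rightarrow> (nat \<Rightarrow> nat) \<Rightarrow> nat \<Rightarrow> 'a" where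
  "colv n E x q = (\<lambda>s. if s < n then x (cns E s q) else 0)"

lemma upd0_cns: "p \<in> grid n (Suc E) \<Longrightarrow> p(0 := s) = cns E s (tlp E p)"
  by (metis cns_tlp cns_upd0)

lemma lv0_colv: "p \<in> grid n (Suc E) \<Longrightarrow> line_vec n x 0 p = colv n E x (tlp E p)"
  unfolding line_vec_def colv_def by (auto simp: fun_eq_iff upd0_cns)

lemma axis_cong: "A i = B i \<Longrightarrow> axis_code n E A i = axis_code n E B i"
  unfolding axis_code_def by simp

lemma lin_sum:
  fixes Q :: "(nat \<Rightarrow> 'a::field) \<Rightarrow> (nat \<Rightarrow> 'a)"
  assumes add: "\<forall>x y. Q (\<lambda>j. x j + y j) = (\<lambda>j. Q x j + Q y j)"
    and scl: "\<forall>c x. Q (\<lambda>j. c * x j) = (\<lambda>j. c * Q x j)"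
    and fin: "finite S"
  shows "Q (\<lambda>j. \<Sum>s\<in>S. c s * v s j) = (\<lambda>j. \<Sum>s\<in>S. c s * Q (v s) j)"
  using fin
proof (induction S rule: finite_induct)
  case empty
  have "Q (\<lambda>j. 0 * v undefined j) = (\<lambda>j. 0 * Q (v undefined) j)" using scl by blast
  then show ?case by simp
next
  case (insert x F)
  have "Q (\<lambda>j. \<Sum>s\<in>insert x F. c s * v s j) = Q (\<lambda>j. c x * v x j + (\<Sum>s\<in>F. c s * v s j))"
    using insert by simp
  also have "\<dots> = (\<lambda>j. Q (\<lambda>j. c x * v x j) j + Q (\<lambda>j. \<Sum>s\<in>F. c s * v s j) j)"
    using add[rule_format, of "\<lambda>j. c x * v x j" "\<lambda>j. \<Sum>s\<in>F. c s * v s j"] by simp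
  also have "\<dots> = (\<lambda>j. c x * Q (v x) j + (\<Sum>s\<in>F. c s * Q (v s) j))"
    using scl insert.IH by simp
  finally show ?case using insert by simp
qed

lemma vec_expand:
  fixes v :: "nat \<Rightarrow> 'a::field"
  assumes "\<forall>j. n \<le> j \<longrightarrow> v j = 0"
  shows "v = (\<lambda>j. \<Sum>s<n. v s * (if j = s then 1 else 0))"
proof
  fix j
  show "v j = (\<Sum>s<n. v s * (if j = s then 1 else 0))"
  proof (cases "j < n")
    case True
    have "(\<Sum>s<n. v s * (if j = s then 1 else 0)) = (\<Sum>s\<in>{j}. v s)"
      by (rule sum.mono_neutral_cong_right) (use True in auto)
    then show ?thesis by simp
  next
    case False
    then show ?thesis using assms by auto
  qed
qed

lemma main:
  fixes C :: "nat \<Rightarrow> (nat \<Rightarrow> 'a::field) set" and C1' :: "(nat \<Rightarrow> 'a) set"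
    and Q :: "(nat \<Rightarrow> 'a) \<Rightarrow> (nat \<Rightarrow> 'a)"
  assumes n1: "n \<ge> 1" and E1: "E \<ge> 1"
    and codes: "\<And>i. i < Suc E \<Longrightarrow> is_code n (C i)"
    and c1: "is_code n C1'" and sub: "C1' \<subseteq> C 0"
    and Qin: "\<forall>v. Q v \<in> C1'" and Qfix: "\<forall>v\<in>C1'. Q v = v"
    and Qadd: "\<forall>x y. Q (\<lambda>j. x j + y j) = (\<lambda>j. Q x j + Q y j)"
    and Qscl: "\<forall>c x. Q (\<lambda>j. c * x j) = (\<lambda>j. c * Q x j)"
    and r1: "r1 > 0" "product_expanding n (Suc E) C r1"
    and r2: "r2 > 0" "product_expanding n E (\<lambda>i. C (Suc i)) r2"
  shows "product_expanding n (Suc E) (C(0 := C1')) (r1 * r2 / (r2 + 1))"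
  unfolding product_expanding_def
proof
  fix c assume "c \<in> sum_code n (Suc E) (C(0 := C1'))"
  then obtain b where b: "\<forall>i<Suc E. b i \<in> axis_code n (Suc E) (C(0 := C1')) i"
    and cb: "c = (\<lambda>p. \<Sum>i<Suc E. b i p)"
    unfolding sum_code_def by blast
  have mono: "axis_code n (Suc E) (C(0 := C1')) i \<subseteq> axis_code n (Suc E) C i" for i
    by (rule axis_mono) (use sub in auto)
  have "c \<in> sum_code n (Suc E) C" unfolding sum_code_def using b cb mono by blast
  then obtain a where a: "\<forall>i<Suc E. a i \<in> axis_code n (Suc E) C i"
    and ca: "c = (\<lambda>p. \<Sum>i<Suc E. a i p)"
    and ra: "r1 * (\<Sum>i<Suc E. line_wt n (Suc E) i (a i)) \<le> rel_wt n (Suc E) c"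
    using r1(2) unfolding product_expanding_def by blast
  have Q0: "Q (\<lambda>j. 0) = (\<lambda>j. 0)"
    using Qscl[rule_format, of 0 "\<lambda>j. 0"] by simp
  define a0' where "a0' = (\<lambda>p. if p \<in> grid n (Suc E) then Q (colv n E (a 0) (tlp E p)) (p 0) else 0)"
  define f where "f = (\<lambda>p. a 0 p - a0' p)"
  have a0w: "a 0 \<in> words n (Suc E)" using a unfolding axis_code_def by auto
  have lva0': "line_vec n a0' 0 p = Q (colv n E (a 0) (tlp E p))" if p: "p \<in> grid n (Suc E)" for p
  proof
    fix s
    have "Q (colv n E (a 0) (tlp E p)) \<in> C1'" using Qin by blast
    hence z: "n \<le> s \<Longrightarrow> Q (colv n E (a 0) (tlp E p)) s = 0" using code_out[OF c1] by blast
    show "line_vec n a0' 0 p s = Q (colv n E (a 0) (tlp E p)) s"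
      using z p unfolding line_vec_def a0'_def by (auto simp: upd_grid tlp_upd0)
  qed
  have a0'ax: "a0' \<in> axis_code n (Suc E) (C(0 := C1')) 0"
    unfolding axis_code_def words_def
  proof (intro CollectI conjI allI impI ballI)
    fix p :: "nat \<Rightarrow> nat" assume "p \<notin> grid n (Suc E)" thus "a0' p = 0" unfolding a0'_def by simp
  next
    fix p assume "p \<in> lines n (Suc E) 0"
    hence "p \<in> grid n (Suc E)" unfolding lines_def by simp
    thus "line_vec n a0' 0 p \<in> (C(0 := C1')) 0" using lva0' Qin by simp
  qed
  have lw0: "line_wt n (Suc E) 0 a0' \<le> line_wt n (Suc E) 0 (a 0)"
  proof -
    have "{p \<in> lines n (Suc E) 0. line_vec n a0' 0 p \<noteq> (\<lambda>_. 0)} \<subseteq>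
          {p \<in> lines n (Suc E) 0. line_vec n (a 0) 0 p \<noteq> (\<lambda>_. 0)}"
    proof (intro subsetI CollectI conjI)
      fix p assume p: "p \<in> {p \<in> lines n (Suc E) 0. line_vec n a0' 0 p \<noteq> (\<lambda>_. 0)}"
      hence pg: "p \<in> grid n (Suc E)" unfolding lines_def by auto
      show "p \<in> lines n (Suc E) 0" using p by auto
      show "line_vec n (a 0) 0 p \<noteq> (\<lambda>_. 0)"
      proof
        assume "line_vec n (a 0) 0 p = (\<lambda>_. 0)"
        hence "colv n E (a 0) (tlp E p) = (\<lambda>_. 0)" using lv0_colv[OF pg, of "a 0"] by simp
        hence "line_vec n a0' 0 p = (\<lambda>_. 0)" using lva0'[OF pg] Q0 by simp
        thus False using p by simp
      qed
    qed
    hence "card {p \<in> lines n (Suc E) 0. line_vec n a0' 0 p \<noteq> (\<lambda>_. 0)} \<le>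
          card {p \<in> lines n (Suc E) 0. line_vec n (a 0) 0 p \<noteq> (\<lambda>_. 0)}"
      by (rule card_mono[rotated]) (auto simp: lines_def)
    thus ?thesis unfolding line_wt_def by (simp add: divide_right_mono)
  qed
  have fsupp: "f p \<noteq> 0 \<Longrightarrow> p \<in> grid n (Suc E) \<and> colv n E (a 0) (tlp E p) \<noteq> (\<lambda>_. 0)" for p
  proof -
    assume fp: "f p \<noteq> 0"
    have pg: "p \<in> grid n (Suc E)"
    proof (rule ccontr)
      assume "p \<notin> grid n (Suc E)"
      hence "a 0 p = 0" "a0' p = 0" using a0w unfolding words_def a0'_def by auto
      thus False using fp unfolding f_def by simp
    qed
    moreover have "colv n E (a 0) (tlp E p) \<noteq> (\<lambda>_. 0)"
    proof
      assume z: "colv n E (a 0) (tlp E p) = (\<lambda>_. 0)"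
      have "a 0 p = colv n E (a 0) (tlp E p) (p 0)"
        unfolding colv_def using pg p0_lt cns_tlp by auto
      hence "a 0 p = 0" using z by simp
      moreover have "a0' p = 0" unfolding a0'_def using z Q0 by simp
      ultimately show False using fp unfolding f_def by simp
    qed
    ultimately show ?thesis by blast
  qed
  have rwf: "rel_wt n (Suc E) f \<le> line_wt n (Suc E) 0 (a 0)"
  proof -
    define N where "N = card {q \<in> grid n E. colv n E (a 0) q \<noteq> (\<lambda>_. 0)}"
    have "{p \<in> grid n (Suc E). f p \<noteq> 0} \<subseteq> {p \<in> grid n (Suc E). colv n E (a 0) (tlp E p) \<noteq> (\<lambda>_. 0)}"
      using fsupp by auto
    hence "card {p \<in> grid n (Suc E). f p \<noteq> 0} \<le> card {p \<in> grid n (Suc E). (\<lambda>t q. colv n E (a 0) q \<noteq> (\<lambda>_. 0)) (p 0) (tlp E p)}"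
      by (intro card_mono) auto
    also have "\<dots> = (\<Sum>t<n. card {q \<in> grid n E. (\<lambda>t q. colv n E (a 0) q \<noteq> (\<lambda>_. 0)) t q})"
      by (rule card_split[of n E "\<lambda>t q. colv n E (a 0) q \<noteq> (\<lambda>_. 0)"])
    also have "\<dots> = n * N" unfolding N_def by simp
    finally have c1: "card {p \<in> grid n (Suc E). f p \<noteq> 0} \<le> n * N" .
    have "{p \<in> lines n (Suc E) 0. line_vec n (a 0) 0 p \<noteq> (\<lambda>_. 0)} =
          {p \<in> grid n (Suc E). (\<lambda>t q. t = 0 \<and> colv n E (a 0) q \<noteq> (\<lambda>_. 0)) (p 0) (tlp E p)}"
      unfolding lines_def by (auto simp: lv0_colv)
    hence "card {p \<in> lines n (Suc E) 0. line_vec n (a 0) 0 p \<noteq> (\<lambda>_. 0)} =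
          (\<Sum>t<n. card {q \<in> grid n E. (\<lambda>t q. t = 0 \<and> colv n E (a 0) q \<noteq> (\<lambda>_. 0)) t q})"
      using card_split[of n E "\<lambda>t q. t = 0 \<and> colv n E (a 0) q \<noteq> (\<lambda>_. 0)"] by simp
    also have "\<dots> = (\<Sum>t<n. if t = 0 then N else 0)"
      by (rule sum.cong) (auto simp: N_def)
    also have "\<dots> = N" using n1 by simp
    finally have c2: "card {p \<in> lines n (Suc E) 0. line_vec n (a 0) 0 p \<noteq> (\<lambda>_. 0)} = N" .
    have cf: "real (card {p \<in> grid n (Suc E). f p \<noteq> 0}) \<le> real (n * N)" using c1 of_nat_le_iff by blast
    have "rel_wt n (Suc E) f = real (card {p \<in> grid n (Suc E). f p \<noteq> 0}) / real (n ^ Suc E)"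
      unfolding rel_wt_def card_grid ..
    also have "\<dots> \<le> real (n * N) / real (n ^ Suc E)"
      by (rule divide_right_mono[OF cf]) simp
    also have "\<dots> = real N / real n ^ E" using n1 by simp
    also have "\<dots> = line_wt n (Suc E) 0 (a 0)" unfolding line_wt_def c2 by simp
    finally show ?thesis .
  qed
  define e0 where "e0 = (\<lambda>p. a 0 p - b 0 p)"
  have e0sum: "e0 p = (\<Sum>i<E. (b (Suc i) p - a (Suc i) p))" for p
  proof -
    have "(\<Sum>i<Suc E. a i p) = (\<Sum>i<Suc E. b i p)" using fun_cong[OF ca, of p] fun_cong[OF cb, of p] by simp
    hence "a 0 p + (\<Sum>i<E. a (Suc i) p) = b 0 p + (\<Sum>i<E. b (Suc i) p)"
      by (simp add: sum.lessThan_Suc_shift del: sum.lessThan_Suc)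
    hence "a 0 p - b 0 p = (\<Sum>i<E. b (Suc i) p) - (\<Sum>i<E. a (Suc i) p)"
      by (simp add: algebra_simps)
    thus ?thesis unfolding e0_def by (simp add: sum_subtractf)
  qed
  define del :: "nat \<Rightarrow> nat \<Rightarrow> 'a" where "del s = (\<lambda>j. if j = s then 1 else 0)" for s
  define k where "k t s = del s t - Q (del s) t" for t s
  define y where "y t i = (\<lambda>q. \<Sum>s<n. k t s * (slice n E s (b (Suc i)) q - slice n E s (a (Suc i)) q))" for t i
  have bS: "b (Suc i) \<in> axis_code n (Suc E) C (Suc i)" if "i < E" for i
    using b that axis_cong[of "C(0 := C1')" "Suc i" C] by auto
  have aS: "a (Suc i) \<in> axis_code n (Suc E) C (Suc i)" if "i < E" for i
    using a that by auto
  have yax: "y t i \<in> axis_code n E (\<lambda>k. C (Suc k)) i" if "i < E" for t i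
    unfolding y_def
    by (rule axis_lin) (use that codes slice_axis[OF that _ bS[OF that]] slice_axis[OF that _ aS[OF that]] in auto)
  have b0C: "line_vec n (b 0) 0 p \<in> C1'" if "p \<in> lines n (Suc E) 0" for p
    using b that unfolding axis_code_def by auto
  have fslice: "slice n E t f = (\<lambda>q. \<Sum>i<E. y t i q)" if tn: "t < n" for t
  proof
    fix q
    show "slice n E t f q = (\<Sum>i<E. y t i q)"
    proof (cases "q \<in> grid n E")
      case False
      then show ?thesis unfolding slice_def y_def by simp
    next
      case qg: True
      have cg: "cns E t q \<in> grid n (Suc E)" using cns_grid[OF tn qg] .
      have s1: "slice n E t f q = colv n E (a 0) q t - Q (colv n E (a 0) q) t"
      proof -
        have tq: "tlp E (cns E t q) = q" by (rule tlp_cns[OF qg])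
        show ?thesis unfolding slice_def f_def a0'_def colv_def using qg cg tn unfolding tq by simp
      qed
      have cb0: "colv n E (b 0) q \<in> C1'"
      proof -
        have "cns E 0 q \<in> lines n (Suc E) 0" unfolding lines_def using cns_grid[OF _ qg] n1 by simp
        hence "line_vec n (b 0) 0 (cns E 0 q) \<in> C1'" by (rule b0C)
        thus ?thesis using lv0_colv[OF cns_grid[OF _ qg], of 0 "b 0"] n1 tlp_cns[OF qg] by simp
      qed
      have ca0: "colv n E (a 0) q = (\<lambda>j. colv n E (b 0) q j + colv n E e0 q j)"
        unfolding colv_def e0_def by (auto simp: fun_eq_iff)
      have "Q (colv n E (a 0) q) = (\<lambda>j. Q (colv n E (b 0) q) j + Q (colv n E e0 q) j)"
        unfolding ca0 using Qadd by blast
      also have "\<dots> = (\<lambda>j. colv n E (b 0) q j + Q (colv n E e0 q) j)"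
        using Qfix cb0 by simp
      finally have "slice n E t f q = colv n E e0 q t - Q (colv n E e0 q) t"
        unfolding s1 ca0 by simp
      moreover have ex: "colv n E e0 q = (\<lambda>j. \<Sum>s<n. colv n E e0 q s * del s j)"
        unfolding del_def by (rule vec_expand) (simp add: colv_def)
      moreover have lq: "Q (\<lambda>j. \<Sum>s<n. colv n E e0 q s * del s j) = (\<lambda>j. \<Sum>s<n. colv n E e0 q s * Q (del s) j)"
        by (rule lin_sum[OF Qadd Qscl]) simp
      ultimately have "slice n E t f q = (\<Sum>s<n. colv n E e0 q s * del s t) - (\<Sum>s<n. colv n E e0 q s * Q (del s) t)"
      proof -
        assume sl: "slice n E t f q = colv n E e0 q t - Q (colv n E e0 q) t"
        have e1: "colv n E e0 q t = (\<Sum>s<n. colv n E e0 q s * del s t)"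
          using fun_cong[OF ex, of t] by (simp only:)
        have "Q (colv n E e0 q) = (\<lambda>j. \<Sum>s<n. colv n E e0 q s * Q (del s) j)"
          using arg_cong[of _ _ Q, OF ex] lq by simp
        hence e2: "Q (colv n E e0 q) t = (\<Sum>s<n. colv n E e0 q s * Q (del s) t)"
          by simp
        show ?thesis unfolding sl e2 using e1 by simp
      qed
      also have "\<dots> = (\<Sum>s<n. colv n E e0 q s * k t s)"
        unfolding k_def by (simp add: sum_subtractf right_diff_distrib)
      also have "\<dots> = (\<Sum>s<n. (\<Sum>i<E. slice n E s (b (Suc i)) q - slice n E s (a (Suc i)) q) * k t s)"
        by (rule sum.cong) (auto simp: colv_def slice_def e0sum qg)
      also have "\<dots> = (\<Sum>i<E. y t i q)"
        unfolding y_def sum_distrib_right by (subst sum.swap) (simp add: mult.commute)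
      finally show ?thesis .
    qed
  qed
  have "\<forall>t\<in>{..<n}. \<exists>g. (\<forall>i<E. g i \<in> axis_code n E (\<lambda>k. C (Suc k)) i) \<and> slice n E t f = (\<lambda>q. \<Sum>i<E. g i q)
      \<and> r2 * (\<Sum>i<E. line_wt n E i (g i)) \<le> rel_wt n E (slice n E t f)"
  proof
    fix t assume "t \<in> {..<n}"
    hence "slice n E t f \<in> sum_code n E (\<lambda>k. C (Suc k))"
      unfolding sum_code_def using fslice yax by auto
    thus "\<exists>g. (\<forall>i<E. g i \<in> axis_code n E (\<lambda>k. C (Suc k)) i) \<and> slice n E t f = (\<lambda>q. \<Sum>i<E. g i q)
      \<and> r2 * (\<Sum>i<E. line_wt n E i (g i)) \<le> rel_wt n E (slice n E t f)"
      using r2(2) unfolding product_expanding_def by blast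
  qed
  from bchoice[OF this] obtain G where G0: "\<forall>t\<in>{..<n}. (\<forall>i<E. G t i \<in> axis_code n E (\<lambda>k. C (Suc k)) i) \<and> slice n E t f = (\<lambda>q. \<Sum>i<E. G t i q)
      \<and> r2 * (\<Sum>i<E. line_wt n E i (G t i)) \<le> rel_wt n E (slice n E t f)" by blast
  have G: "\<And>t. t < n \<Longrightarrow> (\<forall>i<E. G t i \<in> axis_code n E (\<lambda>k. C (Suc k)) i)"
      "\<And>t. t < n \<Longrightarrow> slice n E t f = (\<lambda>q. \<Sum>i<E. G t i q)"
      "\<And>t. t < n \<Longrightarrow> r2 * (\<Sum>i<E. line_wt n E i (G t i)) \<le> rel_wt n E (slice n E t f)"
    using G0 by blast+
  define h where "h i = asm n E G i" for i
  have hax: "h i \<in> axis_code n (Suc E) C (Suc i)" if "i < E" for i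
    unfolding h_def by (rule asm_axis) (use that G(1) in auto)
  have hsum: "(\<Sum>i<E. h i p) = f p" for p
  proof (cases "p \<in> grid n (Suc E)")
    case True
    have "(\<Sum>i<E. h i p) = (\<Sum>i<E. G (p 0) i (tlp E p))" unfolding h_def asm_def using True by simp
    also have "\<dots> = slice n E (p 0) f (tlp E p)" using G(2)[OF p0_lt[OF True]] by simp
    also have "\<dots> = f p" unfolding slice_def using True tlp_grid cns_tlp by simp
    finally show ?thesis .
  next
    case False
    then show ?thesis unfolding h_def asm_def using fsupp by force
  qed
  define d where "d k = (case k of 0 \<Rightarrow> a0' | Suc i \<Rightarrow> (\<lambda>p. a (Suc i) p + h i p))" for k
  have dax: "\<forall>i<Suc E. d i \<in> axis_code n (Suc E) (C(0 := C1')) i"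
  proof (intro allI impI)
    fix i assume i: "i < Suc E"
    show "d i \<in> axis_code n (Suc E) (C(0 := C1')) i"
    proof (cases i)
      case 0
      then show ?thesis using a0'ax unfolding d_def by simp
    next
      case (Suc j)
      hence j: "j < E" using i by simp
      have "(\<lambda>p. a (Suc j) p + h j p) \<in> axis_code n (Suc E) C (Suc j)"
        by (rule axis_add) (use codes j aS hax in auto)
      then show ?thesis unfolding d_def Suc using axis_cong[of "C(0 := C1')" "Suc j" C] by simp
    qed
  qed
  have dsum: "c = (\<lambda>p. \<Sum>i<Suc E. d i p)"
  proof
    fix p
    have "(\<Sum>i<Suc E. d i p) = a0' p + (\<Sum>i<E. a (Suc i) p + h i p)"
      unfolding d_def by (simp add: sum.lessThan_Suc_shift del: sum.lessThan_Suc)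
    also have "\<dots> = a0' p + f p + (\<Sum>i<E. a (Suc i) p)"
      by (simp add: sum.distrib hsum algebra_simps)
    also have "\<dots> = (\<Sum>i<Suc E. a i p)"
      unfolding f_def by (simp add: sum.lessThan_Suc_shift del: sum.lessThan_Suc)
    finally show "c p = (\<Sum>i<Suc E. d i p)" using ca by simp
  qed
  define Sa where "Sa = (\<Sum>i<Suc E. line_wt n (Suc E) i (a i))"
  define Wd where "Wd = (\<Sum>i<Suc E. line_wt n (Suc E) i (d i))"
  have Sa_eq: "Sa = line_wt n (Suc E) 0 (a 0) + (\<Sum>i<E. line_wt n (Suc E) (Suc i) (a (Suc i)))"
    unfolding Sa_def by (simp add: sum.lessThan_Suc_shift del: sum.lessThan_Suc)
  have Sa0: "line_wt n (Suc E) 0 (a 0) \<le> Sa"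
    unfolding Sa_eq by (simp add: sum_nonneg lw_nonneg)
  have hw: "(\<Sum>i<E. line_wt n (Suc E) (Suc i) (h i)) \<le> line_wt n (Suc E) 0 (a 0) / r2"
  proof -
    have "(\<Sum>i<E. line_wt n (Suc E) (Suc i) (h i)) = (\<Sum>i<E. (\<Sum>t<n. line_wt n E i (G t i)) / real n)"
      unfolding h_def by (rule sum.cong) (use lw_asm n1 E1 in auto)
    also have "\<dots> = (\<Sum>t<n. (\<Sum>i<E. line_wt n E i (G t i))) / real n"
      by (simp add: sum_divide_distrib[symmetric] sum.swap[of _ "{..<E}"])
    also have "\<dots> \<le> (\<Sum>t<n. rel_wt n E (slice n E t f) / r2) / real n"
    proof (rule divide_right_mono[OF sum_mono])
      fix t assume "t \<in> {..<n}"
      thus "(\<Sum>i<E. line_wt n E i (G t i)) \<le> rel_wt n E (slice n E t f) / r2"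
        using G(3)[of t] r2(1) by (simp add: field_simps mult.commute)
    qed simp
    also have "\<dots> = rel_wt n (Suc E) f / r2"
      unfolding rw_split[OF n1] by (simp add: sum_divide_distrib[symmetric])
    also have "\<dots> \<le> line_wt n (Suc E) 0 (a 0) / r2"
      using rwf r2(1) by (simp add: divide_right_mono)
    finally show ?thesis .
  qed
  have "Wd = line_wt n (Suc E) 0 a0' + (\<Sum>i<E. line_wt n (Suc E) (Suc i) (\<lambda>p. a (Suc i) p + h i p))"
    unfolding Wd_def d_def by (simp add: sum.lessThan_Suc_shift del: sum.lessThan_Suc)
  also have "\<dots> \<le> line_wt n (Suc E) 0 (a 0) + (\<Sum>i<E. line_wt n (Suc E) (Suc i) (a (Suc i)) + line_wt n (Suc E) (Suc i) (h i))"
    by (rule add_mono[OF lw0 sum_mono[OF lw_subadd]])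
  also have "\<dots> = Sa + (\<Sum>i<E. line_wt n (Suc E) (Suc i) (h i))"
    unfolding Sa_eq by (simp add: sum.distrib)
  also have "\<dots> \<le> Sa + Sa / r2"
    using hw Sa0 r2(1) divide_right_mono[OF Sa0, of r2] by simp
  finally have Wd_le: "Wd \<le> Sa * ((r2 + 1) / r2)"
    using r2(1) by (simp add: field_simps)
  have "r1 * r2 / (r2 + 1) * Wd \<le> r1 * r2 / (r2 + 1) * (Sa * ((r2 + 1) / r2))"
    by (rule mult_left_mono[OF Wd_le]) (use r1(1) r2(1) in simp)
  also have "\<dots> = r1 * Sa"
  proof -
    have "r2 + r2 * r2 > 0" "r2 + 1 > 0" using r2(1) by (simp_all add: add_pos_pos)
    thus ?thesis using r2(1) by (simp add: field_simps)
  qed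
  also have "\<dots> \<le> rel_wt n (Suc E) c" using ra unfolding Sa_def .
  finally have wfin: "r1 * r2 / (r2 + 1) * Wd \<le> rel_wt n (Suc E) c" .
  show "\<exists>d. (\<forall>i<Suc E. d i \<in> axis_code n (Suc E) (C(0 := C1')) i) \<and> c = (\<lambda>p. \<Sum>i<Suc E. d i p) \<and>
      r1 * r2 / (r2 + 1) * (\<Sum>i<Suc E. line_wt n (Suc E) i (d i)) \<le> rel_wt n (Suc E) c"
    using dax dsum wfin unfolding Wd_def by blast
qed

lemma proj_exists:
  fixes A :: "(nat \<Rightarrow> 'a::field) set"
  assumes "is_code n A"
  shows "\<exists>Q. (\<forall>v. Q v \<in> A) \<and> (\<forall>v\<in>A. Q v = v) \<and> (\<forall>x y. Q (\<lambda>j. x j + y j) = (\<lambda>j. Q x j + Q y j))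
     \<and> (\<forall>c x. Q (\<lambda>j. c * x j) = (\<lambda>j. c * Q x j))"
proof -
  define sc where "sc = (\<lambda>(c::'a) (v::nat\<Rightarrow>'a). (\<lambda>j. c * v j))"
  interpret V: vector_space sc
    by unfold_locales (auto simp: sc_def fun_eq_iff algebra_simps)
  interpret VP: vector_space_pair sc sc by unfold_locales
  have sub: "V.subspace A"
    apply (rule V.subspaceI)
    using assms unfolding is_code_def sc_def by (auto simp: plus_fun_def zero_fun_def)
  obtain B where B: "B \<subseteq> A" "V.independent B" "A \<subseteq> V.span B"
    using V.maximal_independent_subset by blast
  have spB: "V.span B = A" using B sub V.span_subspace by blast
  define f where "f = (\<lambda>x. if x \<in> B then x else (0::nat\<Rightarrow>'a))"
  have indB2: "V.independent (V.extend_basis B)" using V.independent_extend_basis[OF B(2)] .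
  define g where "g = VP.construct (V.extend_basis B) f"
  have lin: "Vector_Spaces.linear sc sc g" unfolding g_def using VP.linear_construct[OF indB2] .
  have rng: "range g = V.span (f ` V.extend_basis B)"
    unfolding g_def using VP.range_construct_eq_span[OF indB2] .
  have "f ` V.extend_basis B \<subseteq> V.span B"
    unfolding f_def using V.span_base V.span_zero by auto
  hence "V.span (f ` V.extend_basis B) \<subseteq> A" using spB V.span_minimal V.subspace_span by metis
  hence r: "\<forall>v. g v \<in> A" using rng by auto
  have fixB: "\<forall>b\<in>B. g b = b" unfolding g_def
    using VP.construct_basis[OF indB2] V.extend_basis_superset[OF B(2)] f_def by auto
  have linid: "Vector_Spaces.linear sc sc id"
    by (rule V.linear_id)
  have fx: "\<forall>v\<in>A. g v = v"
  proof
    fix v assume "v \<in> A"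
    hence "v \<in> V.span B" using spB by simp
    thus "g v = v" using VP.linear_eq_on[OF lin linid, of v B] fixB unfolding id_def by blast
  qed
  have add: "\<forall>x y. g (\<lambda>j. x j + y j) = (\<lambda>j. g x j + g y j)"
  proof (intro allI)
    fix x y :: "nat \<Rightarrow> 'a"
    have "g (x + y) = g x + g y" using lin unfolding Vector_Spaces.linear_iff by blast
    thus "g (\<lambda>j. x j + y j) = (\<lambda>j. g x j + g y j)" by (simp add: plus_fun_def)
  qed
  have scl: "\<forall>c x. g (\<lambda>j. c * x j) = (\<lambda>j. c * g x j)"
  proof (intro allI)
    fix c and x :: "nat \<Rightarrow> 'a"
    have "g (sc c x) = sc c (g x)" using lin unfolding Vector_Spaces.linear_iff by blast
    thus "g (\<lambda>j. c * x j) = (\<lambda>j. c * g x j)" by (simp add: sc_def)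
  qed
  show ?thesis using r fx add scl by blast
qed

lemma PE_mono:
  assumes "product_expanding n E A r" "r' \<le> r"
  shows "product_expanding n E A r'"
  unfolding product_expanding_def
proof
  fix c assume "c \<in> sum_code n E A"
  then obtain a where a: "(\<forall>i<E. a i \<in> axis_code n E A i)" "c = (\<lambda>p. \<Sum>i<E. a i p)"
      "r * (\<Sum>i<E. line_wt n E i (a i)) \<le> rel_wt n E c"
    using assms(1) unfolding product_expanding_def by blast
  have "r' * (\<Sum>i<E. line_wt n E i (a i)) \<le> r * (\<Sum>i<E. line_wt n E i (a i))"
    by (rule mult_right_mono[OF assms(2)]) (simp add: sum_nonneg lw_nonneg)
  thus "\<exists>a. (\<forall>i<E. a i \<in> axis_code n E A i) \<and> c = (\<lambda>p. \<Sum>i<E. a i p) \<and>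
      r' * (\<Sum>i<E. line_wt n E i (a i)) \<le> rel_wt n E c" using a by force
qed

lemma PE_zero: "product_expanding n E A 0"
  unfolding product_expanding_def sum_code_def using rw_nonneg by auto

lemma PE_nonpos: "r \<le> 0 \<Longrightarrow> product_expanding n E A r"
  using PE_mono[OF PE_zero] by blast

lemma rho_upper: "product_expanding n E A r \<Longrightarrow> ereal r \<le> rho n E A"
  unfolding rho_def by (rule Sup_upper) auto

lemma rho_ge0: "0 \<le> rho n E A"
  using rho_upper[OF PE_zero] by (simp add: zero_ereal_def)

lemma rho_below: "ereal y < rho n E A \<Longrightarrow> product_expanding n E A y"
  unfolding rho_def less_Sup_iff using PE_mono by fastforce

lemma PE_n0:
  assumes "E \<ge> 1" shows "product_expanding 0 E A r"
  unfolding product_expanding_def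
proof
  fix c assume "c \<in> sum_code 0 E A"
  then obtain a where a: "(\<forall>i<E. a i \<in> axis_code 0 E A i)" "c = (\<lambda>p. \<Sum>i<E. a i p)"
    unfolding sum_code_def by blast
  have g: "grid 0 E = {}"
  proof -
    have False if "p \<in> grid 0 E" for p
    proof -
      have "p 0 < 0" using that assms unfolding grid_iff by auto
      thus False by simp
    qed
    thus ?thesis by auto
  qed
  have "line_wt 0 E i x = 0" for i and x :: "(nat \<Rightarrow> nat) \<Rightarrow> 'a"
    unfolding line_wt_def lines_def g by simp
  thus "\<exists>a. (\<forall>i<E. a i \<in> axis_code 0 E A i) \<and> c = (\<lambda>p. \<Sum>i<E. a i p) \<and>
      r * (\<Sum>i<E. line_wt 0 E i (a i)) \<le> rel_wt 0 E c" using a rw_nonneg[of 0 E c] by auto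
qed

lemma real_choice:
  fixes r x y0 :: real
  assumes r: "0 < r" and x: "0 < x" and lt: "r < y0 * x / (x + 1)"
  shows "\<exists>r1 r2. 0 < r1 \<and> 0 < r2 \<and> r1 < y0 \<and> r2 < x \<and> r \<le> r1 * r2 / (r2 + 1)"
proof -
  define M where "M = y0 * x / (x + 1)"
  have M: "0 < M" "r < M" using lt r unfolding M_def by auto
  have y0: "0 < y0"
  proof (rule ccontr)
    assume "\<not> 0 < y0"
    hence "y0 * x \<le> 0" using x by (simp add: mult_nonpos_nonneg)
    hence "M \<le> 0" unfolding M_def using x by (simp add: divide_nonpos_pos)
    thus False using M by simp
  qed
  define u where "u = r / M"
  have u: "0 < u" "u < 1" using M r unfolding u_def by auto
  define l where "l = (u + 1) / 2"
  have l: "0 < l" "l < 1" using u unfolding l_def by auto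
  have l2: "u \<le> l * l"
  proof -
    have "0 \<le> (u - 1) * (u - 1)" by simp
    thus ?thesis unfolding l_def by (simp add: field_simps power2_eq_square)
  qed
  define r1 where "r1 = l * y0"
  define r2 where "r2 = l * x"
  have r1: "0 < r1" "r1 < y0" unfolding r1_def using l y0 by auto
  have r2: "0 < r2" "r2 < x" unfolding r2_def using l x by auto
  have "r = u * M" unfolding u_def using M by simp
  also have "\<dots> \<le> (l * l) * M" using l2 M by (simp add: mult_right_mono)
  also have "\<dots> = (l * l * y0 * x) / (x + 1)" unfolding M_def by simp
  also have "\<dots> \<le> (l * l * y0 * x) / (r2 + 1)"
    by (rule divide_left_mono) (use r2 l y0 x in auto)
  also have "\<dots> = r1 * r2 / (r2 + 1)" unfolding r1_def r2_def by (simp add: algebra_simps)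
  finally show ?thesis using r1 r2 by blast
qed

lemma choose_r:
  fixes \<rho> \<rho>' :: ereal
  assumes p: "0 \<le> \<rho>" and p': "0 \<le> \<rho>'" and r: "0 < r" and lt: "ereal r < \<rho> / (1 + inverse \<rho>')"
  shows "\<exists>r1 r2. 0 < r1 \<and> 0 < r2 \<and> ereal r1 < \<rho> \<and> ereal r2 < \<rho>' \<and> r \<le> r1 * r2 / (r2 + 1)"
proof (cases \<rho>')
  case PInf
  hence "ereal r < \<rho>" using lt by simp
  then obtain z where z: "ereal r < ereal z" "ereal z < \<rho>" using ereal_dense2 by blast
  hence zr: "r < z" by simp
  define r2 where "r2 = r / (z - r) + 1"
  have r2: "0 < r2" unfolding r2_def using zr r by (simp add: add_pos_pos)
  have "r * (r2 + 1) \<le> z * r2"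
  proof -
    have "(z - r) * r2 = r + (z - r)" unfolding r2_def using zr by (simp add: field_simps)
    thus ?thesis using zr by (simp add: algebra_simps)
  qed
  hence "r \<le> z * r2 / (r2 + 1)" using r2 by (simp add: field_simps)
  thus ?thesis using z zr r r2 PInf by (intro exI[of _ z] exI[of _ r2]) auto
next
  case (real x)
  have x0: "0 \<le> x" using p' real by simp
  show ?thesis
  proof (cases "x = 0")
    case True
    hence "\<rho> / (1 + inverse \<rho>') = 0" using real by simp
    thus ?thesis using lt r by simp
  next
    case False
    hence x: "0 < x" using x0 by simp
    have den: "1 + inverse \<rho>' = ereal (1 + 1 / x)" using real x by (simp add: inverse_eq_divide)
    have dpos: "0 < 1 + 1 / x" using x by (simp add: add_pos_pos)
    show ?thesis
    proof (cases \<rho>)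
      case PInf
      define r2 where "r2 = x / 2"
      define r1 where "r1 = r * (r2 + 1) / r2"
      have r2: "0 < r2" "r2 < x" unfolding r2_def using x by auto
      have r1: "0 < r1" unfolding r1_def using r r2 by (simp add: add_pos_pos)
      have "r1 * r2 = r * (r2 + 1)" unfolding r1_def using r2 by simp
      hence "r1 * r2 / (r2 + 1) = r" using r2 by (simp add: add_pos_pos)
      hence "r \<le> r1 * r2 / (r2 + 1)" by simp
      thus ?thesis using r1 r2 PInf real by (intro exI[of _ r1] exI[of _ r2]) auto
    next
      case (real y0)
      have "r < y0 / (1 + 1 / x)" using lt den real dpos by simp
      also have "y0 / (1 + 1 / x) = y0 * x / (x + 1)" using x by (simp add: field_simps)
      finally obtain r1 r2 where rr: "0 < r1" "0 < r2" "r1 < y0" "r2 < x" "r \<le> r1 * r2 / (r2 + 1)"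
        using real_choice[OF r x] by blast
      thus ?thesis using real \<open>\<rho>' = ereal x\<close> by (intro exI[of _ r1] exI[of _ r2]) auto
    next
      case MInf
      thus ?thesis using p by simp
    qed
  qed
next
  case MInf
  thus ?thesis using p' by simp
qed

theorem lemma1:
  fixes C :: "nat \<Rightarrow> (nat \<Rightarrow> 'a::{field,finite}) set"
    and C1' :: "(nat \<Rightarrow> 'a) set"
    and n D :: nat
  assumes "CHAR('a) = 2"
    and "D \<ge> 2"
    and "\<And>i. i < D \<Longrightarrow> is_code n (C i)"
    and "is_code n C1'"
    and "C1' \<subseteq> C 0"
  shows "rho n D (C(0 := C1')) \<ge>
           rho n D C / (1 + inverse (rho n (D - 1) (\<lambda>i. C (Suc i))))"
proof -
  obtain E where D: "D = Suc E" using assms(2) by (cases D) auto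
  have E1: "E \<ge> 1" using assms(2) D by simp
  have DE: "D - 1 = E" using D by simp
  show ?thesis
  proof (cases "n = 0")
    case True
    have "rho n D (C(0 := C1')) = \<infinity>"
    proof (rule ereal_top)
      fix B show "ereal B \<le> rho n D (C(0 := C1'))"
        using rho_upper[OF PE_n0[of D "C(0 := C1')" B]] True assms(2) by simp
    qed
    thus ?thesis by simp
  next
    case False
    hence n1: "n \<ge> 1" by simp
    obtain Q where Q: "\<forall>v. Q v \<in> C1'" "\<forall>v\<in>C1'. Q v = v"
      "\<forall>x y. Q (\<lambda>j. x j + y j) = (\<lambda>j. Q x j + Q y j)"
      "\<forall>c x. Q (\<lambda>j. c * x j) = (\<lambda>j. c * Q x j)"
      using proj_exists[OF assms(4)] by blast
    show ?thesis unfolding DE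
    proof (rule dense_le)
      fix y assume y: "y < rho n D C / (1 + inverse (rho n E (\<lambda>i. C (Suc i))))"
      show "y \<le> rho n D (C(0 := C1'))"
      proof (cases y)
        case (real r)
        show ?thesis
        proof (cases "r \<le> 0")
          case True
          thus ?thesis using real rho_upper[OF PE_nonpos[OF True]] by simp
        next
          case False
          hence r: "0 < r" by simp
          obtain r1 r2 where rr: "0 < r1" "0 < r2" "ereal r1 < rho n D C"
              "ereal r2 < rho n E (\<lambda>i. C (Suc i))" "r \<le> r1 * r2 / (r2 + 1)"
            using choose_r[OF rho_ge0 rho_ge0 r] y real by blast
          have "product_expanding n (Suc E) (C(0 := C1')) (r1 * r2 / (r2 + 1))"
            by (rule main[OF n1 E1 _ assms(4) assms(5) Q rr(1) _ rr(2) rho_below[OF rr(4)]])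
               (use assms(3) D rho_below[OF rr(3)] in auto)
          hence "product_expanding n D (C(0 := C1')) r"
            using PE_mono rr(5) D by blast
          thus ?thesis using real rho_upper by blast
        qed
      next
        case PInf
        thus ?thesis using y by simp
      next
        case MInf
        thus ?thesis by simp
      qed
    qed
  qed
qed

end
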